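(* Let $S$ be a $\Gamma$-hemiring, let $\mu,\nu$ be fuzzy h-ideals of $S$ and let $x,y\in S$. Then $\langle x,\mu\rangle\times\langle y,\nu\rangle$ is a fuzzy h-ideal of the $\Gamma$-hemiring $S\times S$.
   Context: A $\Gamma$-hemiring is a pair of additive commutative semigroups with zero $S$ and $\Gamma$ with a map $S\times\Gamma\times S\to S$, $(a,\alpha,b)\mapsto a\alpha b$, such that for all $a,b,c\in S$, $\alpha,\beta\in\Gamma$: $(a+b)\alpha c=a\alpha c+b\alpha c$; $a\alpha(b+c)=a\alpha b+a\alpha c$; $a(\alpha+\beta)b=a\alpha b+a\beta b$; $a\alpha(b\beta c)=(a\alpha b)\beta c$; $0\alpha a=0=a\alpha0$; $a0b=0=b0a$. $S\times S$ is a $\Gamma$-hemiring with componentwise addition and $(a,b)\gamma(c,d)=(a\gamma c,b\gamma d)$. A fuzzy h-ideal of a $\Gamma$-hemiring $T$ is a map $\mu:T\to[0,1]$, not identically $0$, such that for all $x,y,a,b,z\in T$, $\gamma\in\Gamma$: $\mu(x+y)\ge\min\{\mu(x),\mu(y)\}$; $\mu(x\gamma y)\ge\mu(x)$ and $\mu(x\gamma y)\ge\mu(y)$; $x+a+z=b+z$ implies $\mu(x)\ge\min\{\mu(a),\mu(b)\}$. For fuzzy subsets $\mu,\nu$ of $S$, $(\mu\times\nu)(a,b)=\min\{\mu(a),\nu(b)\}$. The extension of a fuzzy subset $\mu$ of $S$ by $x\in S$ is $\langle x,\mu\rangle(y)=\inf_{s\in S,\ \alpha,\gamma\in\Gamma}\mu(x\alpha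 s\gamma y)$. *)

theory Defs
  imports Complex_Main "HOL-Library.Product_Plus"
begin

definition gamma_hemiring :: "('a::comm_monoid_add \<Rightarrow> 'g::comm_monoid_add \<Rightarrow> 'a \<Rightarrow> 'a) \<Rightarrow> bool" where
  "gamma_hemiring M \<longleftrightarrow>
     (\<forall>a b c \<alpha>. M (a + b) \<alpha> c = M a \<alpha> c + M b \<alpha> c) \<and>
     (\<forall>a b c \<alpha>. M a \<alpha> (b + c) = M a \<alpha> b + M a \<alpha> c) \<and>
     (\<forall>a b \<alpha> \<beta>. M a (\<alpha> + \<beta>) b = M a \<alpha> b + M a \<beta> b) \<and>
     (\<forall>a b c \<alpha> \<beta>. M a \<alpha> (M b \<beta> c) = M (M a \<alpha> b) \<beta> c) \<and>
     (\<forall>a \<alpha>. M 0 \<alpha> a = 0 \<and> M a \<alpha> 0 = 0) \<and>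
     (\<forall>a b. M a 0 b = 0 \<and> M b 0 a = 0)"

text \<open>The componentwise Gamma-multiplication on S x S (addition on pairs is the
componentwise one from Product_Plus).\<close>

definition prod_mult :: "('a \<Rightarrow> 'g \<Rightarrow> 'a \<Rightarrow> 'a) \<Rightarrow> ('a \<times> 'a) \<Rightarrow> 'g \<Rightarrow> ('a \<times> 'a) \<Rightarrow> ('a \<times> 'a)" where
  "prod_mult M p \<gamma> q = (M (fst p) \<gamma> (fst q), M (snd p) \<gamma> (snd q))"

definition fuzzy_h_ideal :: "('t::comm_monoid_add \<Rightarrow> 'g \<Rightarrow> 't \<Rightarrow> 't) \<Rightarrow> ('t \<Rightarrow> real) \<Rightarrow> bool" where
  "fuzzy_h_ideal M \<mu> \<longleftrightarrow>
     (\<forall>x. 0 \<le> \<mu> x \<and> \<mu> x \<le> 1) \<and>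
     (\<exists>x. \<mu> x \<noteq> 0) \<and>
     (\<forall>x y. \<mu> (x + y) \<ge> min (\<mu> x) (\<mu> y)) \<and>
     (\<forall>x y \<gamma>. \<mu> (M x \<gamma> y) \<ge> \<mu> x \<and> \<mu> (M x \<gamma> y) \<ge> \<mu> y) \<and>
     (\<forall>x a b z. x + a + z = b + z \<longrightarrow> \<mu> x \<ge> min (\<mu> a) (\<mu> b))"

definition fuzzy_prod :: "('a \<Rightarrow> real) \<Rightarrow> ('a \<Rightarrow> real) \<Rightarrow> ('a \<times> 'a \<Rightarrow> real)" where
  "fuzzy_prod \<mu> \<nu> p = min (\<mu> (fst p)) (\<nu> (snd p))"

definition extension :: "('a \<Rightarrow> 'g \<Rightarrow> 'a \<Rightarrow> 'a) \<Rightarrow> 'a \<Rightarrow> ('a \<Rightarrow> real) \<Rightarrow> 'a \<Rightarrow> real" where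
  "extension M x \<mu> y = Inf {\<mu> (M x \<alpha> (M s \<gamma> y)) | s \<alpha> \<gamma>. True}"

end

theory Submission
  imports Defs
begin

lemma ext_bdd:
  assumes "fuzzy_h_ideal M \<mu>"
  shows "bdd_below {\<mu> (M x \<alpha> (M s \<gamma> y)) | s \<alpha> \<gamma>. True}"
  using assms unfolding fuzzy_h_ideal_def bdd_below_def by blast

lemma ext_lower:
  assumes "fuzzy_h_ideal M \<mu>"
  shows "extension M x \<mu> y \<le> \<mu> (M x \<alpha> (M s \<gamma> y))"
  unfolding extension_def by (rule cInf_lower[OF _ ext_bdd[OF assms]]) blast

lemma ext_ge:
  assumes "\<And>s \<alpha> \<gamma>. c \<le> \<mu> (M x \<alpha> (M s \<gamma> y))"
  shows "c \<le> extension M x \<mu> y"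
  unfolding extension_def by (rule cInf_greatest) (use assms in auto)

lemma ext_props:
  assumes H: "gamma_hemiring M" and F: "fuzzy_h_ideal M \<mu>"
  shows "0 \<le> extension M x \<mu> w" "extension M x \<mu> w \<le> 1"
    "extension M x \<mu> 0 > 0"
    "extension M x \<mu> (a + b) \<ge> min (extension M x \<mu> a) (extension M x \<mu> b)"
    "extension M x \<mu> (M a g b) \<ge> extension M x \<mu> a"
    "extension M x \<mu> (M a g b) \<ge> extension M x \<mu> b"
    "u + a + z = b + z \<Longrightarrow> extension M x \<mu> u \<ge> min (extension M x \<mu> a) (extension M x \<mu> b)"
proof -
  have Fb: "\<And>p. 0 \<le> \<mu> p \<and> \<mu> p \<le> 1" and Fnz: "\<exists>p. \<mu> p \<noteq> 0"
    and Fadd: "\<And>p q. \<mu> (p + q) \<ge> min (\<mu> p) (\<mu> q)"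
    and Fm: "\<And>p g q. \<mu> (M p g q) \<ge> \<mu> p \<and> \<mu> (M p g q) \<ge> \<mu> q"
    and Fh: "\<And>p q r t. p + q + t = r + t \<Longrightarrow> \<mu> p \<ge> min (\<mu> q) (\<mu> r)"
    using F unfolding fuzzy_h_ideal_def by (simp_all only: simp_thms)
  have Fm1: "\<And>p g q. \<mu> (M p g q) \<ge> \<mu> p" and Fm2: "\<And>p g q. \<mu> (M p g q) \<ge> \<mu> q"
    using Fm by (simp_all only: simp_thms)
  have Hl: "\<And>a b c \<alpha>. M (a + b) \<alpha> c = M a \<alpha> c + M b \<alpha> c"
    and Hr: "\<And>a b c \<alpha>. M a \<alpha> (b + c) = M a \<alpha> b + M a \<alpha> c"
    and Hassoc: "\<And>a b c \<alpha> \<beta>. M a \<alpha> (M b \<beta> c) = M (M a \<alpha> b) \<beta> c"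
    and Hz: "\<And>a \<alpha>. M 0 \<alpha> a = 0 \<and> M a \<alpha> 0 = 0"
    and Hz2: "\<And>a b. M a 0 b = 0 \<and> M b 0 a = 0"
    using H unfolding gamma_hemiring_def by (simp_all only: simp_thms)
  show "0 \<le> extension M x \<mu> w" by (rule ext_ge) (use Fb in auto)
  show "extension M x \<mu> w \<le> 1" using ext_lower[OF F, of x w 0 0 0] Fb[of "M x 0 (M 0 0 w)"] by linarith
  have e0: "extension M x \<mu> 0 = \<mu> 0"
  proof -
    have "{\<mu> (M x \<alpha> (M s \<gamma> 0)) | s \<alpha> \<gamma>. True} = {\<mu> 0}" using Hz by auto
    thus ?thesis unfolding extension_def by simp
  qed
  obtain t where t: "\<mu> t \<noteq> 0" using Fnz by blast
  have "\<mu> (M 0 0 t) \<ge> \<mu> t" by (rule Fm2)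
  hence "\<mu> 0 \<ge> \<mu> t" using Hz2 by simp
  moreover have "\<mu> t \<ge> 0" using Fb by blast
  ultimately have "\<mu> 0 > 0" using t by linarith
  thus "extension M x \<mu> 0 > 0" using e0 by simp
  show "extension M x \<mu> (a + b) \<ge> min (extension M x \<mu> a) (extension M x \<mu> b)"
  proof (rule ext_ge)
    fix s \<alpha> \<gamma>
    have eqd: "M x \<alpha> (M s \<gamma> (a + b)) = M x \<alpha> (M s \<gamma> a) + M x \<alpha> (M s \<gamma> b)" by (simp only: Hr)
    have "\<mu> (M x \<alpha> (M s \<gamma> (a + b))) \<ge> min (\<mu> (M x \<alpha> (M s \<gamma> a))) (\<mu> (M x \<alpha> (M s \<gamma> b)))"
      unfolding eqd by (rule Fadd)
    moreover have "extension M x \<mu> a \<le> \<mu> (M x \<alpha> (M s \<gamma> a))" "extension M x \<mu> b \<le> \<mu> (M x \<alpha> (M s \<gamma> b))"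
      using ext_lower[OF F] by auto
    ultimately show "min (extension M x \<mu> a) (extension M x \<mu> b) \<le> \<mu> (M x \<alpha> (M s \<gamma> (a + b)))"
      by linarith
  qed
  show "extension M x \<mu> (M a g b) \<ge> extension M x \<mu> a"
  proof (rule ext_ge)
    fix s \<alpha> \<gamma>
    have "M x \<alpha> (M s \<gamma> (M a g b)) = M (M x \<alpha> (M s \<gamma> a)) g b" by (simp add: Hassoc)
    hence "\<mu> (M x \<alpha> (M s \<gamma> (M a g b))) \<ge> \<mu> (M x \<alpha> (M s \<gamma> a))" using Fm1 by metis
    thus "extension M x \<mu> a \<le> \<mu> (M x \<alpha> (M s \<gamma> (M a g b)))"
      using ext_lower[OF F, of x a \<alpha> s \<gamma>] by linarith
  qed
  show "extension M x \<mu> (M a g b) \<ge> extension M x \<mu> b"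
  proof (rule ext_ge)
    fix s \<alpha> \<gamma>
    have "M x \<alpha> (M s \<gamma> (M a g b)) = M x \<alpha> (M (M s \<gamma> a) g b)" by (simp add: Hassoc)
    thus "extension M x \<mu> b \<le> \<mu> (M x \<alpha> (M s \<gamma> (M a g b)))"
      using ext_lower[OF F, of x b \<alpha> "M s \<gamma> a" g] by simp
  qed
  assume eq: "u + a + z = b + z"
  show "extension M x \<mu> u \<ge> min (extension M x \<mu> a) (extension M x \<mu> b)"
  proof (rule ext_ge)
    fix s \<alpha> \<gamma>
    let ?f = "\<lambda>w. M x \<alpha> (M s \<gamma> w)"
    have "?f (u + a + z) = ?f (b + z)" using eq by simp
    hence "?f u + ?f a + ?f z = ?f b + ?f z" by (simp only: Hr)
    hence "\<mu> (?f u) \<ge> min (\<mu> (?f a)) (\<mu> (?f b))" by (rule Fh)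
    moreover have "extension M x \<mu> a \<le> \<mu> (?f a)" "extension M x \<mu> b \<le> \<mu> (?f b)"
      using ext_lower[OF F] by auto
    ultimately show "min (extension M x \<mu> a) (extension M x \<mu> b) \<le> \<mu> (?f u)" by linarith
  qed
qed

lemma minh1: "min (a::real) c \<le> e \<Longrightarrow> min b d \<le> f \<Longrightarrow> min (min a b) (min c d) \<le> min e f"
  by (auto simp: min_def split: if_splits)
lemma minh2: "(a::real) \<le> e \<Longrightarrow> b \<le> f \<Longrightarrow> min a b \<le> min e f"
  by (auto simp: min_def)

theorem theorem3p15:
  fixes M :: "'a::comm_monoid_add \<Rightarrow> 'g::comm_monoid_add \<Rightarrow> 'a \<Rightarrow> 'a"
    and \<mu> \<nu> :: "'a \<Rightarrow> real" and x y :: 'a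
  assumes "gamma_hemiring M"
    and "fuzzy_h_ideal M \<mu>" and "fuzzy_h_ideal M \<nu>"
  shows "fuzzy_h_ideal (prod_mult M) (fuzzy_prod (extension M x \<mu>) (extension M y \<nu>))"
proof -
  note A = ext_props[OF assms(1,2), where x=x] 
  note B = ext_props[OF assms(1,3), where x=y]
  let ?E = "extension M x \<mu>" and ?F = "extension M y \<nu>"
  show ?thesis unfolding fuzzy_h_ideal_def fuzzy_prod_def prod_mult_def
  proof (intro conjI allI impI)
    fix p :: "'a \<times> 'a"
    show "0 \<le> min (?E (fst p)) (?F (snd p))" using A(1) B(1) by simp
    show "min (?E (fst p)) (?F (snd p)) \<le> 1" using A(2) B(2) by (simp add: min_le_iff_disj)
  next
    show "\<exists>p. min (?E (fst p)) (?F (snd p)) \<noteq> 0"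
      by (rule exI[of _ "(0,0)"]) (use A(3) B(3) in auto)
  next
    fix p q :: "'a \<times> 'a"
    show "min (min (?E (fst p)) (?F (snd p))) (min (?E (fst q)) (?F (snd q)))
          \<le> min (?E (fst (p + q))) (?F (snd (p + q)))"
      unfolding fst_add snd_add by (rule minh1[OF A(4) B(4)])
  next
    fix p q :: "'a \<times> 'a" and g
    show "min (?E (fst p)) (?F (snd p)) \<le> min (?E (fst (M (fst p) g (fst q), M (snd p) g (snd q)))) (?F (snd (M (fst p) g (fst q), M (snd p) g (snd q))))"
      unfolding fst_conv snd_conv by (rule minh2[OF A(5) B(5)])
    show "min (?E (fst q)) (?F (snd q)) \<le> min (?E (fst (M (fst p) g (fst q), M (snd p) g (snd q)))) (?F (snd (M (fst p) g (fst q), M (snd p) g (snd q))))"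
      unfolding fst_conv snd_conv by (rule minh2[OF A(6) B(6)])
  next
    fix u a b z :: "'a \<times> 'a"
    assume eq: "u + a + z = b + z"
    have e1: "fst u + fst a + fst z = fst b + fst z"
      using arg_cong[OF eq, of fst] by (simp only: fst_add)
    have e2: "snd u + snd a + snd z = snd b + snd z"
      using arg_cong[OF eq, of snd] by (simp only: snd_add)
    show "min (min (?E (fst a)) (?F (snd a))) (min (?E (fst b)) (?F (snd b)))
          \<le> min (?E (fst u)) (?F (snd u))"
      by (rule minh1[OF A(7)[OF e1] B(7)[OF e2]])
  qed
qed

end
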